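(* Let $p\ge 2$, and let $v,s\in\mathbb{R}^n$ satisfy $v^Ts\ne 0$. Then the linear map $\phi:\mathbb{R}^{\otimes^{p-1} n}_{\mathrm{sym}}\to\mathbb{R}^{\otimes^{p-1} n}_{\mathrm{sym}}$, $\phi(\mathcal{A}) = P_{\mathrm{sym}}(\mathcal{A}\otimes v)[s]$, is bijective. Consequently, for fixed such $v$, the set $\{P_{\mathrm{sym}}(\mathcal{A}\otimes v):\mathcal{A}\in\mathbb{R}^{\otimes^{p-1} n}_{\mathrm{sym}}\}$ has the same dimension as $\mathbb{R}^{\otimes^{p-1} n}_{\mathrm{sym}}$.
   Context: A $p$-tensor $\mathcal{T} \in \mathbb{R}^{\otimes^p n}$ is a multilinear map $(\mathbb{R}^n)^p \to \mathbb{R}$; $\mathcal{T}[s]$ denotes the $(p-1)$-tensor obtained by fixing the first argument to $s$. The outer product is $(\mathcal{T}_1\otimes\mathcal{T}_2)[s_1,\dots,s_{p_1+p_2}] = \mathcal{T}_1[s_1,\dots,s_{p_1}]\,\mathcal{T}_2[s_{p_1+1},\dots,s_{p_1+p_2}]$, with a vector $v$ regarded as the 1-tensor $s\mapsto v^Ts$. For $\sigma\in S_p$, $\sigma(\mathcal{T})[s_1,\dots,s_p]=\mathcal{T}[s_{\sigma(1)},\dots,s_{\sigma(p)}]$; $\mathcal{T}$ is symmetric if $\sigma(\mathcal{T})=\mathcal{T}$ for all $\sigma$, $\mathbb{R}^{\otimes^p n}_{\mathrm{sym}}$ denotes the symmetric $p$-tensors, and $P_{\mathrm{sym}}(\mathcal{T})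 = \frac{1}{p!}\sum_{\sigma\in S_p}\sigma(\mathcal{T})$. *)

theory Defs
  imports "HOL-Analysis.Analysis" "HOL-Combinatorics.Permutations" "HOL-Library.Function_Algebras"
begin

text \<open>A p-tensor on R^n (n = CARD('n)) is represented literally as a multilinear map
  (R^n)^p -> R, i.e. a function on argument lists of length p that is linear in
  each argument; by convention it is zero on lists of any other length.\<close>

type_synonym 'n tensor = "(real ^ 'n) list \<Rightarrow> real"

definition tensors :: "nat \<Rightarrow> 'n::finite tensor set" where
  "tensors p = {T. (\<forall>xs. length xs \<noteq> p \<longrightarrow> T xs = 0) \<and>
     (\<forall>xs ys. length xs + length ys + 1 = p \<longrightarrow> linear (\<lambda>x. T (xs @ [x] @ ys)))}"

definition tscale :: "real \<Rightarrow> 'n tensor \<Rightarrow> 'n tensor" where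
  "tscale c T = (\<lambda>xs. c * T xs)"

definition contract :: "'n tensor \<Rightarrow> real ^ 'n \<Rightarrow> 'n tensor" where
  "contract T s = (\<lambda>xs. T (s # xs))"

definition vec_tensor :: "real ^ 'n \<Rightarrow> 'n tensor" where
  "vec_tensor v = (\<lambda>xs. if length xs = 1 then v \<bullet> hd xs else 0)"

definition outer :: "nat \<Rightarrow> 'n tensor \<Rightarrow> 'n tensor \<Rightarrow> 'n tensor" where
  "outer p1 T1 T2 = (\<lambda>xs. T1 (take p1 xs) * T2 (drop p1 xs))"

text \<open>sigma(T)[s_1..s_p] = T[s_sigma(1)..s_sigma(p)], indices 0-based.\<close>
definition perm_tensor :: "(nat \<Rightarrow> nat) \<Rightarrow> 'n tensor \<Rightarrow> 'n tensor" where
  "perm_tensor \<sigma> T = (\<lambda>xs. T (map (\<lambda>i. xs ! \<sigma> i) [0..<length xs]))"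

definition symmetric_tensor :: "nat \<Rightarrow> 'n tensor \<Rightarrow> bool" where
  "symmetric_tensor p T \<longleftrightarrow> (\<forall>\<sigma>. \<sigma> permutes {0..<p} \<longrightarrow> perm_tensor \<sigma> T = T)"

definition sym_tensors :: "nat \<Rightarrow> 'n::finite tensor set" where
  "sym_tensors p = {T \<in> tensors p. symmetric_tensor p T}"

definition Psym :: "nat \<Rightarrow> 'n tensor \<Rightarrow> 'n tensor" where
  "Psym p T = (\<lambda>xs. (1 / fact p) * (\<Sum>\<sigma>\<in>{\<sigma>. \<sigma> permutes {0..<p}}. perm_tensor \<sigma> T xs))"

end

theory Submission
  imports Defs
begin

lemma tscale_apply[simp]: "tscale c T xs = c * T xs"
  by (simp add: tscale_def)

interpretation tv: vector_space tscale
  by unfold_locales (auto simp: tscale_def fun_eq_iff algebra_simps)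

lemma tv_linearI:
  assumes "\<And>A B. f (A + B) = f A + f B" "\<And>c A. f (tscale c A) = tscale c (f A)"
  shows "Vector_Spaces.linear tscale tscale f"
  using assms by unfold_locales auto

lemma permutesI_fin:
  fixes f :: "nat \<Rightarrow> nat"
  assumes "inj_on f {0..<n}" "\<And>i. i < n \<Longrightarrow> f i < n" "\<And>i. i \<ge> n \<Longrightarrow> f i = i"
  shows "f permutes {0..<n}"
proof (rule bij_imp_permutes)
  have "f ` {0..<n} = {0..<n}"
    by (rule endo_inj_surj) (use assms in auto)
  then show "bij_betw f {0..<n} {0..<n}" using assms(1) by (simp add: bij_betw_def)
  show "\<And>x. x \<notin> {0..<n} \<Longrightarrow> f x = x" using assms(3) by auto
qed

lemma perm_lt: "\<sigma> permutes {0..<n::nat} \<Longrightarrow> i < n \<Longrightarrow> \<sigma> i < n"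
  using permutes_in_image[of \<sigma> "{0..<n}" i] by auto

lemma Psym_perm:
  assumes "\<tau> permutes {0..<p}" "length ys = p"
  shows "Psym p T (map (\<lambda>i. ys ! \<tau> i) [0..<p]) = Psym p T ys"
proof -
  have eq: "perm_tensor \<sigma> T (map (\<lambda>i. ys ! \<tau> i) [0..<p]) = perm_tensor (\<tau> \<circ> \<sigma>) T ys"
    if "\<sigma> permutes {0..<p}" for \<sigma>
  proof -
    have "map (\<lambda>i. map (\<lambda>i. ys ! \<tau> i) [0..<p] ! \<sigma> i) [0..<p] = map (\<lambda>i. ys ! (\<tau> \<circ> \<sigma>) i) [0..<p]"
      using perm_lt[OF that] by (auto intro!: map_cong)
    then show ?thesis unfolding perm_tensor_def
      by (simp only: assms(2) length_map length_upt diff_zero)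
  qed
  show ?thesis
    unfolding Psym_def
    using setum_permutations_compose_left[OF assms(1), of "\<lambda>\<sigma>. perm_tensor \<sigma> T ys"]
    by (simp add: eq)
qed


definition del :: "nat \<Rightarrow> 'a list \<Rightarrow> 'a list" where
  "del j xs = take j xs @ drop (Suc j) xs"

lemma length_del[simp]: "j < length xs \<Longrightarrow> length (del j xs) = length xs - 1"
  by (simp add: del_def)

lemma nth_del: "j < length xs \<Longrightarrow> k < length xs - 1 \<Longrightarrow>
    del j xs ! k = xs ! (if k < j then k else Suc k)"
  by (auto simp: del_def nth_append min_def)

lemma sym_perm_eq:
  assumes "symmetric_tensor q A" "\<tau> permutes {0..<q}" "length xs = q"
  shows "A (map (\<lambda>i. xs ! \<tau> i) [0..<q]) = A xs"
proof -
  have "perm_tensor \<tau> A xs = A xs" using assms(1,2) by (simp add: symmetric_tensor_def)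
  thus ?thesis using assms(3) by (simp add: perm_tensor_def)
qed

lemma take_perm_del:
  assumes "\<sigma> permutes {0..<Suc q}" "length ys = Suc q" "symmetric_tensor q A"
  shows "A (map (\<lambda>i. ys ! \<sigma> i) [0..<q]) = A (del (\<sigma> q) ys)"
proof -
  define j where "j = \<sigma> q"
  have j: "j < Suc q" using perm_lt[OF assms(1)] j_def by auto
  have lt: "\<sigma> i < Suc q" if "i < Suc q" for i using perm_lt[OF assms(1) that] .
  have ne: "\<sigma> i \<noteq> j" if "i < q" for i
    using permutes_inj[OF assms(1)] that j_def by (auto dest: injD)
  define \<tau> where "\<tau> i = (if i < q then (if \<sigma> i < j then \<sigma> i else \<sigma> i - 1) else i)" for i
  have \<tau>p: "\<tau> permutes {0..<q}"
  proof (rule permutesI_fin)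
    show "inj_on \<tau> {0..<q}"
    proof (rule inj_onI)
      fix a b assume "a \<in> {0..<q}" "b \<in> {0..<q}" "\<tau> a = \<tau> b"
      then have "\<sigma> a = \<sigma> b" using ne[of a] ne[of b] unfolding \<tau>_def by (auto split: if_splits)
      then show "a = b" using permutes_inj[OF assms(1)] by (auto dest: injD)
    qed
    show "\<tau> i < q" if "i < q" for i using lt[of i] ne[of i] that j unfolding \<tau>_def by auto
    show "\<tau> i = i" if "i \<ge> q" for i using that unfolding \<tau>_def by auto
  qed
  have "map (\<lambda>i. del j ys ! \<tau> i) [0..<q] = map (\<lambda>i. ys ! \<sigma> i) [0..<q]"
  proof (rule map_cong[OF refl])
    fix i assume "i \<in> set [0..<q]"
    then have i: "i < q" by simp
    have "\<tau> i < q" using \<tau>p perm_lt i by blast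
    then show "del j ys ! \<tau> i = ys ! \<sigma> i"
      using nth_del[of j ys "\<tau> i"] assms(2) j ne[OF i] lt[of i] i unfolding \<tau>_def by auto
  qed
  note meq = this
  have len: "length (del j ys) = q" using j assms(2) by simp
  have "A (map (\<lambda>i. ys ! \<sigma> i) [0..<q]) = A (map (\<lambda>i. del j ys ! \<tau> i) [0..<q])"
    by (rule arg_cong[where f=A, OF meq[symmetric]])
  also have "\<dots> = A (del j ys)" by (rule sym_perm_eq[OF assms(3) \<tau>p len])
  finally show ?thesis by (simp add: j_def)
qed

lemma count_sum:
  fixes h :: "nat \<Rightarrow> real"
  shows "(\<Sum>\<sigma>\<in>{\<sigma>. \<sigma> permutes {0..<Suc q}}. h (\<sigma> q)) = fact q * (\<Sum>j<Suc q. h j)"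
proof -
  let ?P = "{\<sigma>. \<sigma> permutes {0..<Suc q}}"
  have fin: "finite ?P" by (rule finite_permutations) simp
  have "(\<Sum>\<sigma>\<in>?P. h (\<sigma> q)) = (\<Sum>j\<in>{..<Suc q}. \<Sum>\<sigma>\<in>{\<sigma>. \<sigma> \<in> ?P \<and> \<sigma> q = j}. h (\<sigma> q))"
    by (rule sum.group[symmetric]) (use fin perm_lt in auto)
  also have "\<dots> = (\<Sum>j<Suc q. fact q * h j)"
  proof (rule sum.cong[OF refl])
    fix j assume j: "j \<in> {..<Suc q}"
    have "bij_betw (\<lambda>\<tau>. Transposition.transpose j q \<circ> \<tau>) {\<tau>. \<tau> permutes {0..<q}} {\<sigma>. \<sigma> \<in> ?P \<and> \<sigma> q = j}"
    proof (rule bij_betw_byWitness[where f'="\<lambda>\<tau>. Transposition.transpose j q \<circ> \<tau>"])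
      show "\<forall>a\<in>{\<tau>. \<tau> permutes {0..<q}}. Transposition.transpose j q \<circ> (Transposition.transpose j q \<circ> a) = a"
        by (auto simp: fun_eq_iff)
      show "\<forall>a\<in>{\<sigma>. \<sigma> \<in> ?P \<and> \<sigma> q = j}. Transposition.transpose j q \<circ> (Transposition.transpose j q \<circ> a) = a"
        by (auto simp: fun_eq_iff)
      have sw: "Transposition.transpose j q permutes {0..<Suc q}" using j by (intro permutes_swap_id) auto
      show "(\<lambda>\<tau>. Transposition.transpose j q \<circ> \<tau>) ` {\<tau>. \<tau> permutes {0..<q}} \<subseteq> {\<sigma>. \<sigma> \<in> ?P \<and> \<sigma> q = j}"
      proof clarsimp
        fix \<tau> assume t: "\<tau> permutes {0..<q}"
        have "\<tau> permutes {0..<Suc q}" using t by (rule permutes_subset) auto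
        then show "Transposition.transpose j q \<circ> \<tau> permutes {0..<Suc q} \<and> Transposition.transpose j q (\<tau> q) = j"
          using permutes_compose[OF _ sw] permutes_not_in[OF t, of q] by auto
      qed
      show "(\<lambda>\<tau>. Transposition.transpose j q \<circ> \<tau>) ` {\<sigma>. \<sigma> \<in> ?P \<and> \<sigma> q = j} \<subseteq> {\<tau>. \<tau> permutes {0..<q}}"
      proof clarsimp
        fix \<sigma> assume t: "\<sigma> permutes {0..<Suc q}" and jq: "j = \<sigma> q"
        have "Transposition.transpose (\<sigma> q) q \<circ> \<sigma> permutes {0..<Suc q}"
          using permutes_compose[OF t sw] jq by simp
        then show "Transposition.transpose (\<sigma> q) q \<circ> \<sigma> permutes {0..<q}"
          by (rule permutes_superset) (simp add: transpose_apply_second)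
      qed
    qed
    then have "card {\<sigma>. \<sigma> \<in> ?P \<and> \<sigma> q = j} = fact q"
      using bij_betw_same_card card_permutations[of "{0..<q}" q] by fastforce
    then show "(\<Sum>\<sigma>\<in>{\<sigma>. \<sigma> \<in> ?P \<and> \<sigma> q = j}. h (\<sigma> q)) = fact q * h j"
      by simp
  qed
  finally show ?thesis by (simp only: sum_distrib_left)
qed

lemma fq: fixes X :: real shows "1 / fact (Suc q) * (fact q * X) = 1 / real (Suc q) * X"
  by (simp add: fact_Suc)

lemma phi_formula:
  assumes A: "symmetric_tensor q A" and xs: "length xs = q"
  shows "contract (Psym (Suc q) (outer q A (vec_tensor v))) s xs =
    (1 / real (Suc q)) * (A xs * (v \<bullet> s) + (\<Sum>k<q. A (s # del k xs) * (v \<bullet> xs ! k)))"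
proof -
  let ?ys = "s # xs"
  let ?P = "{\<sigma>. \<sigma> permutes {0..<Suc q}}"
  have trm: "perm_tensor \<sigma> (outer q A (vec_tensor v)) ?ys = A (del (\<sigma> q) ?ys) * (v \<bullet> ?ys ! \<sigma> q)"
    if "\<sigma> permutes {0..<Suc q}" for \<sigma>
  proof -
    have "perm_tensor \<sigma> (outer q A (vec_tensor v)) ?ys =
       A (take q (map (\<lambda>i. ?ys ! \<sigma> i) [0..<Suc q])) * vec_tensor v (drop q (map (\<lambda>i. ?ys ! \<sigma> i) [0..<Suc q]))"
      using xs by (simp add: perm_tensor_def outer_def)
    also have "take q (map (\<lambda>i. ?ys ! \<sigma> i) [0..<Suc q]) = map (\<lambda>i. ?ys ! \<sigma> i) [0..<q]"
      by (simp add: take_map)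
    also have "drop q (map (\<lambda>i. ?ys ! \<sigma> i) [0..<Suc q]) = [?ys ! \<sigma> q]"
      by (simp add: drop_map)
    finally show ?thesis using take_perm_del[OF that _ A, of ?ys] xs by (simp add: vec_tensor_def)
  qed
  have "contract (Psym (Suc q) (outer q A (vec_tensor v))) s xs =
      (1 / fact (Suc q)) * (\<Sum>\<sigma>\<in>?P. A (del (\<sigma> q) ?ys) * (v \<bullet> ?ys ! \<sigma> q))"
    unfolding contract_def Psym_def by (simp add: trm)
  also have "\<dots> = (1 / fact (Suc q)) * (fact q * (\<Sum>j<Suc q. A (del j ?ys) * (v \<bullet> ?ys ! j)))"
    by (subst count_sum[of "\<lambda>j. A (del j ?ys) * (v \<bullet> ?ys ! j)"]) simp
  also have "(\<Sum>j<Suc q. A (del j ?ys) * (v \<bullet> ?ys ! j)) =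
      A xs * (v \<bullet> s) + (\<Sum>k<q. A (s # del k xs) * (v \<bullet> xs ! k))"
    by (subst sum.lessThan_Suc_shift) (simp add: del_def)
  finally show ?thesis by (simp only: fq)
qed


section \<open>The map phi\<close>

definition phi :: "nat \<Rightarrow> real ^ 'n \<Rightarrow> real ^ 'n \<Rightarrow> 'n tensor \<Rightarrow> 'n tensor" where
  "phi q v s A = contract (Psym (Suc q) (outer q A (vec_tensor v))) s"

lemma phi_zero: assumes "length xs \<noteq> q" shows "phi q v s A xs = 0"
proof -
  have "Suc (length xs) - q \<noteq> Suc 0" using assms by arith
  then show ?thesis
    by (simp add: phi_def contract_def Psym_def perm_tensor_def outer_def vec_tensor_def)
qed

lemma phi_sym: "symmetric_tensor q (phi q v s A)"
  unfolding symmetric_tensor_def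
proof (intro allI impI ext)
  fix \<sigma> :: "nat \<Rightarrow> nat" and xs :: "(real ^ 'a) list"
  assume \<sigma>: "\<sigma> permutes {0..<q}"
  show "perm_tensor \<sigma> (phi q v s A) xs = phi q v s A xs"
  proof (cases "length xs = q")
    case False
    then show ?thesis by (simp add: perm_tensor_def phi_zero)
  next
    case True
    define \<sigma>' where "\<sigma>' i = (if i = 0 then 0 else Suc (\<sigma> (i - 1)))" for i
    have \<sigma>'p: "\<sigma>' permutes {0..<Suc q}"
    proof (rule permutesI_fin)
      show "inj_on \<sigma>' {0..<Suc q}"
      proof (rule inj_onI)
        fix x y assume "x \<in> {0..<Suc q}" "y \<in> {0..<Suc q}" "\<sigma>' x = \<sigma>' y"
        note xy = this(3)
        show "x = y"
        proof (cases "x = 0 \<or> y = 0")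
          case True then show ?thesis using xy unfolding \<sigma>'_def by (auto split: if_splits)
        next
          case False
          then have "\<sigma> (x - 1) = \<sigma> (y - 1)" using xy unfolding \<sigma>'_def by simp
          then have "x - 1 = y - 1" using injD[OF permutes_inj[OF \<sigma>]] by blast
          with False show ?thesis by arith
        qed
      qed
      show "\<sigma>' i < Suc q" if "i < Suc q" for i
        using perm_lt[OF \<sigma>, of "i - 1"] that unfolding \<sigma>'_def by auto
      show "\<sigma>' i = i" if "i \<ge> Suc q" for i
        using permutes_not_in[OF \<sigma>, of "i - 1"] that unfolding \<sigma>'_def by auto
    qed
    have leq: "s # map (\<lambda>i. xs ! \<sigma> i) [0..<q] = map (\<lambda>i. (s # xs) ! \<sigma>' i) [0..<Suc q]"
      by (simp only: map_upt_Suc) (simp add: \<sigma>'_def)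
    have "perm_tensor \<sigma> (phi q v s A) xs = Psym (Suc q) (outer q A (vec_tensor v)) (s # map (\<lambda>i. xs ! \<sigma> i) [0..<q])"
      using True by (simp add: perm_tensor_def phi_def contract_def)
    also have "\<dots> = Psym (Suc q) (outer q A (vec_tensor v)) (s # xs)"
      unfolding leq by (rule Psym_perm[OF \<sigma>'p]) (simp add: True)
    finally show ?thesis by (simp add: phi_def contract_def)
  qed
qed

lemma sym_lin_all:
  assumes sym: "symmetric_tensor q T"
    and lin0: "\<And>r. length r = q - 1 \<Longrightarrow> linear (\<lambda>x. T (x # r))"
    and len: "length as + length bs + 1 = q"
  shows "linear (\<lambda>x. T (as @ [x] @ bs))"
proof (cases as)
  case Nil
  then show ?thesis using lin0[of bs] len by simp
next
  case (Cons a as')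
  define i where "i = length as"
  have i: "0 < i" "i < q" using len Cons i_def by auto
  have \<tau>: "Transposition.transpose 0 i permutes {0..<q}"
    using i by (intro permutes_swap_id) auto
  have eq: "T (as @ [x] @ bs) = T (x # (as' @ [a] @ bs))" for x
  proof -
    have "map (\<lambda>j. (as @ [x] @ bs) ! Transposition.transpose 0 i j) [0..<q] = x # (as' @ [a] @ bs)"
      using len i unfolding Cons i_def
      by (intro nth_equalityI) (auto simp: nth_append nth_Cons' Transposition.transpose_def)
    then show ?thesis
      using sym_perm_eq[OF sym \<tau>, of "as @ [x] @ bs"] len by simp
  qed
  show ?thesis unfolding eq using lin0[of "as' @ [a] @ bs"] len Cons by simp
qed


lemma lin_mult_right: "linear f \<Longrightarrow> linear (\<lambda>x. f x * (c::real))"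
  by (rule linearI) (simp_all add: real_vector.linear_add linear_cmul algebra_simps)

lemma lin_mult_left: "linear f \<Longrightarrow> linear (\<lambda>x. (c::real) * f x)"
  by (rule linearI) (simp_all add: real_vector.linear_add linear_cmul algebra_simps)

lemma lin_inner: "linear (\<lambda>x. (v::real^'n) \<bullet> x)"
  by (rule linearI) (simp_all add: inner_add_right)

lemma tensors_lin:
  "A \<in> tensors q \<Longrightarrow> length as + length bs + 1 = q \<Longrightarrow> linear (\<lambda>x. A (as @ [x] @ bs))"
  by (simp add: tensors_def)

lemma tensors_zero: "A \<in> tensors q \<Longrightarrow> length xs \<noteq> q \<Longrightarrow> A xs = 0"
  by (simp add: tensors_def)

lemma phi_lin0:
  assumes A: "A \<in> sym_tensors q" and r: "length r = q - 1" and q: "q \<ge> 1"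
  shows "linear (\<lambda>x. phi q v s A (x # r))"
proof -
  obtain q' where q': "q = Suc q'" using q by (cases q) auto
  have sym: "symmetric_tensor q A" and tens: "A \<in> tensors q"
    using A by (auto simp: sym_tensors_def)
  have eq: "phi q v s A (x # r) = (1 / real (Suc q)) * (A (x # r) * (v \<bullet> s) +
      (A (s # r) * (v \<bullet> x) + (\<Sum>k<q'. A (s # x # del k r) * (v \<bullet> r ! k))))" for x
  proof -
    have len: "length (x # r) = q" using r q' by simp
    have s1: "(\<Sum>k<q. A (s # del k (x#r)) * (v \<bullet> (x#r)!k)) =
        A (s # r) * (v \<bullet> x) + (\<Sum>k<q'. A (s # x # del k r) * (v \<bullet> r ! k))"
      unfolding q' by (subst sum.lessThan_Suc_shift) (simp add: del_def)
    show ?thesis by (simp only: phi_def phi_formula[OF sym len] s1)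
  qed
  have l1: "linear (\<lambda>x. A (x # r))" using tensors_lin[OF tens, of "[]" r] r q' by simp
  have l2: "linear (\<lambda>x. A (s # r) * (v \<bullet> x))" by (rule lin_mult_left[OF lin_inner])
  have l3: "linear (\<lambda>x. A (s # x # del k r))" if "k < q'" for k
    using tensors_lin[OF tens, of "[s]" "del k r"] r q' that by simp
  show ?thesis unfolding eq
    by (intro lin_mult_left real_vector.linear_compose_add lin_mult_right l1 l2
        real_vector.linear_compose_sum ballI) (use l3 in auto)
qed

lemma phi_sym_tensors:
  assumes A: "A \<in> sym_tensors q" and q: "q \<ge> 1"
  shows "phi q v s A \<in> sym_tensors q"
  unfolding sym_tensors_def tensors_def
  using phi_sym[of q v s A] phi_zero[of _ q v s A]
    sym_lin_all[OF phi_sym phi_lin0[OF A _ q]]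
  by auto


lemma phi_linear: "Vector_Spaces.linear tscale tscale (phi q v s)"
proof (rule tv_linearI)
  fix A B :: "'a tensor"
  show "phi q v s (A + B) = phi q v s A + phi q v s B"
    by (rule ext) (simp add: phi_def contract_def Psym_def perm_tensor_def outer_def
        sum.distrib distrib_right distrib_left)
next
  fix c and A :: "'a tensor"
  show "phi q v s (tscale c A) = tscale c (phi q v s A)"
    by (rule ext) (simp add: phi_def contract_def Psym_def perm_tensor_def outer_def
        sum_distrib_left algebra_simps)
qed

definition psi :: "nat \<Rightarrow> real ^ 'n \<Rightarrow> 'n tensor \<Rightarrow> 'n tensor" where
  "psi q v A = Psym (Suc q) (outer q A (vec_tensor v))"

lemma psi_linear: "Vector_Spaces.linear tscale tscale (psi q v)"
proof (rule tv_linearI)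
  fix A B :: "'a tensor"
  show "psi q v (A + B) = psi q v A + psi q v B"
    by (rule ext) (simp add: psi_def Psym_def perm_tensor_def outer_def
        sum.distrib distrib_right distrib_left)
next
  fix c and A :: "'a tensor"
  show "psi q v (tscale c A) = tscale c (psi q v A)"
    by (rule ext) (simp add: psi_def Psym_def perm_tensor_def outer_def
        sum_distrib_left algebra_simps)
qed

lemma phi_psi: "phi q v s A = contract (psi q v A) s"
  by (simp add: phi_def psi_def)

lemma sym_subspace: "tv.subspace (sym_tensors q :: 'n::finite tensor set)"
  unfolding tv.subspace_def
proof (intro conjI ballI allI)
  show "0 \<in> sym_tensors q"
    by (simp add: sym_tensors_def tensors_def symmetric_tensor_def perm_tensor_def
        fun_eq_iff real_vector.linear_zero)
  fix A B :: "'n tensor" assume A: "A \<in> sym_tensors q" and B: "B \<in> sym_tensors q"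
  show "A + B \<in> sym_tensors q"
    using A B unfolding sym_tensors_def tensors_def symmetric_tensor_def
    by (auto simp: perm_tensor_def fun_eq_iff intro!: real_vector.linear_compose_add)
next
  fix c and A :: "'n tensor" assume A: "A \<in> sym_tensors q"
  show "tscale c A \<in> sym_tensors q"
    using A unfolding sym_tensors_def tensors_def symmetric_tensor_def
    by (auto simp: perm_tensor_def fun_eq_iff intro!: lin_mult_left)
qed


section \<open>Injectivity\<close>

lemma sum_split_add: "(\<Sum>k<a + m. f k) = (\<Sum>k<a. f k) + (\<Sum>k<m. f (a + k :: nat))"
  by (induct m) (simp_all add: add.assoc)

lemma inj_step:
  assumes A: "A \<in> sym_tensors q" and c: "v \<bullet> s \<noteq> 0" and z: "phi q v s A = 0"
    and am: "a + m = q" and ys: "length ys = m"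
    and hyp: "\<And>k. k < m \<Longrightarrow> A (replicate (Suc a) s @ del k ys) = 0"
  shows "A (replicate a s @ ys) = 0"
proof -
  define xs where "xs = replicate a s @ ys"
  have sym: "symmetric_tensor q A" using A by (simp add: sym_tensors_def)
  have len: "length xs = q" using am ys by (simp add: xs_def)
  have t1: "A (s # del k xs) * (v \<bullet> xs ! k) = A xs * (v \<bullet> s)" if k: "k < a" for k
  proof -
    have "take k xs = replicate k s" using k by (simp add: xs_def take_append min_def)
    moreover have "drop (Suc k) xs = replicate (a - Suc k) s @ ys" using k by (simp add: xs_def)
    ultimately have "s # del k xs = replicate (Suc k + (a - Suc k)) s @ ys"
      by (simp add: del_def replicate_add)
    also have "Suc k + (a - Suc k) = a" using k by simp
    finally have "s # del k xs = xs" by (simp add: xs_def)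
    moreover have "xs ! k = s" using k by (simp add: xs_def nth_append)
    ultimately show ?thesis by simp
  qed
  have t2: "A (s # del (a + k) xs) * (v \<bullet> xs ! (a + k)) = 0" if k: "k < m" for k
  proof -
    have "del (a + k) xs = replicate a s @ del k ys"
      by (simp add: xs_def del_def)
    then have "s # del (a + k) xs = replicate (Suc a) s @ del k ys" by simp
    then show ?thesis using hyp[OF k] by simp
  qed
  have "0 = phi q v s A xs" using z by simp
  also have "\<dots> = (1 / real (Suc q)) * (A xs * (v \<bullet> s) + (\<Sum>k<q. A (s # del k xs) * (v \<bullet> xs ! k)))"
    unfolding phi_def by (rule phi_formula[OF sym len])
  also have "(\<Sum>k<q. A (s # del k xs) * (v \<bullet> xs ! k)) = real a * (A xs * (v \<bullet> s))"
  proof -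
    have "(\<Sum>k<a. A (s # del k xs) * (v \<bullet> xs ! k)) = (\<Sum>k<a. A xs * (v \<bullet> s))"
      by (rule sum.cong) (simp_all add: t1)
    moreover have "(\<Sum>k<m. A (s # del (a + k) xs) * (v \<bullet> xs ! (a + k))) = 0"
      using t2 by (intro sum.neutral) blast
    ultimately show ?thesis unfolding am[symmetric] sum_split_add by simp
  qed
  finally have "0 = (1 / real (Suc q)) * ((1 + real a) * (v \<bullet> s) * A xs)"
    by (simp add: algebra_simps)
  then have "A xs = 0" using c by simp
  then show ?thesis by (simp add: xs_def)
qed

lemma phi_kernel:
  assumes A: "A \<in> sym_tensors q" and c: "v \<bullet> s \<noteq> 0" and z: "phi q v s A = 0"
  shows "A = 0"
proof -
  have main: "\<forall>ys. length ys = m \<longrightarrow> m \<le> q \<longrightarrow> A (replicate (q - m) s @ ys) = 0" for m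
  proof (induct m)
    case 0
    have "A (replicate q s @ []) = 0" by (rule inj_step[OF A c z]) auto
    then show ?case by simp
  next
    case (Suc m)
    show ?case
    proof (intro allI impI)
      fix ys :: "(real ^ 'a) list" assume ys: "length ys = Suc m" and mq: "Suc m \<le> q"
      show "A (replicate (q - Suc m) s @ ys) = 0"
      proof (rule inj_step[OF A c z _ ys])
        show "q - Suc m + Suc m = q" using mq by simp
        fix k assume k: "k < Suc m"
        have "Suc (q - Suc m) = q - m" using mq by simp
        then show "A (replicate (Suc (q - Suc m)) s @ del k ys) = 0"
          using Suc[rule_format, of "del k ys"] ys k mq by simp
      qed
    qed
  qed
  show ?thesis
  proof (rule ext)
    fix xs :: "(real ^ 'a) list"
    show "A xs = 0 xs"
    proof (cases "length xs = q")
      case True then show ?thesis using main[of q] by simp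
    next
      case False then show ?thesis using A tensors_zero by (auto simp: sym_tensors_def)
    qed
  qed
qed


section \<open>Finite dimensionality\<close>

lemma sum_fun_apply: "(\<Sum>b\<in>S. f b) x = (\<Sum>b\<in>S. f b x :: 'y::comm_monoid_add)"
  by (induct S rule: infinite_finite_induct) auto

definition Lb :: "real ^ 'n \<Rightarrow> 'n tensor \<Rightarrow> 'n tensor" where
  "Lb b U = (\<lambda>xs. if xs = [] then 0 else (hd xs \<bullet> b) * U (tl xs))"

lemma Lb_linear: "Vector_Spaces.linear tscale tscale (Lb b)"
  by (rule tv_linearI) (auto simp: Lb_def fun_eq_iff algebra_simps)

fun W :: "nat \<Rightarrow> 'n::finite tensor set" where
  "W 0 = {\<lambda>xs. if xs = [] then 1 else 0}"
| "W (Suc q) = (\<Union>b\<in>Basis. Lb b ` W q)"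

lemma finite_W: "finite (W q)"
  by (induct q) auto

lemma tensors_span: "T \<in> tensors q \<Longrightarrow> T \<in> tv.span (W q)"
proof (induct q arbitrary: T)
  case 0
  have "T = tscale (T []) (\<lambda>xs. if xs = [] then 1 else 0)"
    using tensors_zero[OF 0] by (auto simp: fun_eq_iff)
  then show ?case by (metis W.simps(1) tv.span_base tv.span_scale singletonI)
next
  case (Suc q)
  define Tb where "Tb b = (\<lambda>r. T (b # r))" for b
  have Tb: "Tb b \<in> tensors q" for b
    unfolding tensors_def Tb_def mem_Collect_eq
  proof (intro conjI allI impI)
    fix r :: "(real ^ 'a) list" assume "length r \<noteq> q"
    then show "T (b # r) = 0" using tensors_zero[OF Suc.prems] by simp
  next
    fix as bs :: "(real ^ 'a) list" assume "length as + length bs + 1 = q"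
    then show "linear (\<lambda>x. T (b # as @ [x] @ bs))"
      using tensors_lin[OF Suc.prems, of "b # as" bs] by simp
  qed
  have eq: "T = (\<Sum>b\<in>Basis. Lb b (Tb b))"
  proof (rule ext)
    fix xs :: "(real ^ 'a) list"
    show "T xs = (\<Sum>b\<in>Basis. Lb b (Tb b)) xs"
    proof (cases xs)
      case Nil then show ?thesis using tensors_zero[OF Suc.prems] by (simp add: Lb_def sum_fun_apply)
    next
      case (Cons x r)
      show ?thesis
      proof (cases "length r = q")
        case False
        then show ?thesis using tensors_zero[OF Suc.prems] Cons
          by (simp add: Lb_def Tb_def sum_fun_apply)
      next
        case True
        have lin: "linear (\<lambda>x. T (x # r))" using tensors_lin[OF Suc.prems, of "[]" r] True by simp
        have "T (x # r) = T ((\<Sum>b\<in>Basis. (x \<bullet> b) *\<^sub>R b) # r)"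
          by (simp add: euclidean_representation)
        also have "\<dots> = (\<Sum>b\<in>Basis. T (((x \<bullet> b) *\<^sub>R b) # r))"
          using real_vector.linear_sum[OF lin, of "\<lambda>b. (x \<bullet> b) *\<^sub>R b" Basis] by (simp add: o_def)
        also have "\<dots> = (\<Sum>b\<in>Basis. (x \<bullet> b) * T (b # r))"
          using linear_cmul[OF lin] by simp
        finally show ?thesis using Cons by (simp add: Lb_def Tb_def sum_fun_apply)
      qed
    qed
  qed
  have "Lb b (Tb b) \<in> tv.span (W (Suc q))" if "b \<in> Basis" for b
  proof -
    interpret lb: Vector_Spaces.linear tscale tscale "Lb b" by (rule Lb_linear)
    have "Lb b (Tb b) \<in> Lb b ` tv.span (W q)" using Suc.hyps[OF Tb] by blast
    also have "\<dots> = tv.span (Lb b ` W q)" by (simp add: lb.span_image)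
    also have "\<dots> \<subseteq> tv.span (W (Suc q))" using that by (intro tv.span_mono) auto
    finally show ?thesis .
  qed
  then show ?case unfolding eq[symmetric] by (subst eq) (rule tv.span_sum)
qed


theorem mainTheorem3:
  fixes p :: nat and v s :: "real ^ 'n::finite"
  assumes "p \<ge> 2" and "v \<bullet> s \<noteq> 0"
  defines "\<phi> \<equiv> (\<lambda>A. contract (Psym p (outer (p - 1) A (vec_tensor v))) s)"
  shows "Vector_Spaces.linear tscale tscale \<phi>
    \<and> bij_betw \<phi> (sym_tensors (p - 1)) (sym_tensors (p - 1))
    \<and> vector_space.dim tscale {Psym p (outer (p - 1) A (vec_tensor v)) | A. A \<in> sym_tensors (p - 1)}
        = vector_space.dim tscale (sym_tensors (p - 1) :: 'n tensor set)"
proof -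
  obtain q where p: "p = Suc q" and q1: "q \<ge> 1" using assms(1) by (cases p) auto
  have pq: "p - 1 = q" using p by simp
  have phieq: "\<phi> = phi q v s" unfolding \<phi>_def phi_def p by simp
  have imgset: "{Psym p (outer (p - 1) A (vec_tensor v)) | A. A \<in> sym_tensors (p - 1)} = psi q v ` sym_tensors q"
    by (auto simp: psi_def p)
  let ?S = "sym_tensors q :: 'n tensor set"
  interpret lp: Vector_Spaces.linear tscale tscale "phi q v s" by (rule phi_linear)
  interpret ls: Vector_Spaces.linear tscale tscale "psi q v" by (rule psi_linear)
  have sub: "tv.subspace ?S" by (rule sym_subspace)
  have into: "phi q v s ` ?S \<subseteq> ?S" using phi_sym_tensors[OF _ q1] by blast
  have inj: "inj_on (phi q v s) ?S"
  proof (rule inj_onI)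
    fix A B assume A: "A \<in> ?S" and B: "B \<in> ?S" and e: "phi q v s A = phi q v s B"
    have "phi q v s (A - B) = 0" using e by (simp add: lp.diff)
    moreover have "A - B \<in> ?S" using tv.subspace_diff[OF sub A B] .
    ultimately have "A - B = 0" using phi_kernel assms(2) by blast
    then show "A = B" by simp
  qed
  have injs: "inj_on (psi q v) ?S"
  proof (rule inj_onI)
    fix A B assume A: "A \<in> ?S" and B: "B \<in> ?S" and e: "psi q v A = psi q v B"
    then have "phi q v s A = phi q v s B" by (simp add: phi_psi)
    then show "A = B" using inj A B by (auto dest: inj_onD)
  qed
  obtain B where B: "B \<subseteq> ?S" "tv.independent B" "?S \<subseteq> tv.span B" "card B = tv.dim ?S"
    by (rule tv.basis_exists)
  have spanB: "tv.span B = ?S" by (rule tv.span_subspace[OF B(1) B(3) sub])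
  have spanS: "tv.span ?S = ?S" using sub by (simp add: tv.span_eq_iff)
  have "B \<subseteq> tv.span (W q)" using B(1) tensors_span by (auto simp: sym_tensors_def)
  then have finB: "finite B" using tv.independent_span_bound[OF finite_W B(2)] by blast
  have surj: "?S \<subseteq> phi q v s ` ?S"
  proof -
    let ?C = "phi q v s ` B"
    have indC: "tv.independent ?C"
      using lp.independent_injective_image[OF B(2)] inj spanB by simp
    have cardC: "card ?C = card B"
      using inj B(1) by (intro card_image) (auto intro: inj_on_subset)
    have CS: "?C \<subseteq> ?S" using B(1) into by blast
    have "?S \<subseteq> tv.span ?C"
    proof
      fix a assume a: "a \<in> ?S"
      show "a \<in> tv.span ?C"
      proof (rule ccontr)
        assume na: "a \<notin> tv.span ?C"
        have ind: "tv.independent (insert a ?C)" by (rule tv.independent_insertI[OF na indC])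
        have "insert a ?C \<subseteq> tv.span B" using a CS B(3) by blast
        then have "card (insert a ?C) \<le> card B"
          using tv.independent_span_bound[OF finB ind] by blast
        moreover have "a \<notin> ?C" using na tv.span_base by blast
        ultimately show False using cardC finB by simp
      qed
    qed
    also have "tv.span ?C = phi q v s ` ?S" by (simp add: lp.span_image spanB)
    finally show ?thesis .
  qed
  have bij: "bij_betw (phi q v s) ?S ?S"
    unfolding bij_betw_def using inj into surj by blast
  have dim: "tv.dim (psi q v ` ?S) = tv.dim ?S"
  proof -
    have "tv.independent (psi q v ` B)"
      using ls.independent_injective_image[OF B(2)] injs spanB by simp
    moreover have "tv.span (psi q v ` B) = tv.span (psi q v ` ?S)"
      by (simp add: ls.span_image spanB spanS)
    ultimately have "tv.dim (psi q v ` ?S) = card (psi q v ` B)"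
      using tv.dim_eq_card by metis
    also have "\<dots> = card B" using injs B(1) by (intro card_image) (auto intro: inj_on_subset)
    finally show ?thesis using B(4) by simp
  qed
  have img: "{Psym p (outer q A (vec_tensor v)) | A. A \<in> sym_tensors q} = psi q v ` ?S"
    by (auto simp: psi_def p)
  show ?thesis
    unfolding phieq pq img using phi_linear bij dim by simp
qed

end
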